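(* Fix a Polish sample space $\Omega$ and let $F,R$ be partially ordered topological spaces that are Souslin spaces with Borel order relations. The constant injection $$\mathrm{const}:F\times R\to\mathrm{DP}_\Omega(F,R),\quad (x_F,x_R)\mapsto {\downarrow}x_F\times{\uparrow}x_R=\{(y_F,y_R): y_F\preceq x_F,\ x_R\preceq y_R\}$$ is quasi-measurable.
   Context: A Souslin space is a Hausdorff space that is a continuous image of a Polish space; analytic sets are continuous images of Polish spaces. Quasi-universal spaces: a set $A$ with a set of maps $\Omega\to A$ (random variables) containing constants and closed under precomposition with Borel measurable maps $\Omega\to\Omega$; a map $f:A\to B$ is quasi-measurable if $f\circ\alpha$ is a random variable of $B$ for every random variable $\alpha$ of $A$. Conventions: the random variables of $F$ and $R$ are the Borel measurable maps from $\Omega$; those of $F\times R$ are pairs of such maps. $\mathrm{DP}_\Omega(F,R)$ is the set of upper sets of $F^{\mathrm{op}}\times R$ ($F$ with reversed order, componentwise order) of the form $\uparrow A$ with $A\subseteq F^{\mathrm{op}}\times R$ analytic, whose random variables are the maps $\alpha:\Omega\to\mathrm{DP}_\Omega(F,R)$ with analytic feasible set $\{(\omega,x_F,x_R):(x_F,x_R)\in\alpha(\omega)\}\subseteq\Omega\times F\times R$. *)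

theory Defs
  imports "HOL-Analysis.Analysis"
begin

definition Polish_top :: "'a topology \<Rightarrow> bool" where
  "Polish_top X \<longleftrightarrow> completely_metrizable_space X \<and> separable_space X"

text \<open>Every Polish space has cardinality at most the continuum, so (up to homeomorphism)
  its carrier can be taken to be a subset of the type real.\<close>
definition analytic_in :: "'a topology \<Rightarrow> 'a set \<Rightarrow> bool" where
  "analytic_in X A \<longleftrightarrow>
     (\<exists>(P :: real topology) g. Polish_top P \<and> continuous_map P X g \<and> g ` topspace P = A)"

definition Souslin_space :: "'a topology \<Rightarrow> bool" where
  "Souslin_space X \<longleftrightarrow> Hausdorff_space X \<and> analytic_in X (topspace X)"

definition Borel_order :: "('a::{topological_space, order}) itself \<Rightarrow> bool" where
  "Borel_order _ \<longleftrightarrow> {p :: 'a \<times> 'a. fst p \<le> snd p} \<in> sets borel"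

text \<open>Up-closure of A in F^op \<times> R (componentwise order, F reversed).\<close>
definition up_opF :: "('f::order \<times> 'r::order) set \<Rightarrow> ('f \<times> 'r) set" where
  "up_opF A = {(yF, yR). \<exists>(aF, aR)\<in>A. yF \<le> aF \<and> aR \<le> yR}"

definition DP_set :: "('f::{topological_space,order} \<times> 'r::{topological_space,order}) set set" where
  "DP_set = {U. \<exists>A. analytic_in euclidean A \<and> U = up_opF A}"

definition DP_rv :: "('o::topological_space \<Rightarrow> ('f::{topological_space,order} \<times> 'r::{topological_space,order}) set) set" where
  "DP_rv = {\<alpha>. (\<forall>\<omega>. \<alpha> \<omega> \<in> DP_set) \<and>
               analytic_in euclidean {(\<omega>, xF, xR). (xF, xR) \<in> \<alpha> \<omega>}}"

definition pair_rv :: "('o::topological_space \<Rightarrow> ('f::topological_space \<times> 'r::topological_space)) set" where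
  "pair_rv = {(\<lambda>\<omega>. (bF \<omega>, bR \<omega>)) | bF bR.
               bF \<in> borel_measurable borel \<and> bR \<in> borel_measurable borel}"

definition quasi_measurable ::
  "('o \<Rightarrow> 'a) set \<Rightarrow> ('o \<Rightarrow> 'b) set \<Rightarrow> ('a \<Rightarrow> 'b) \<Rightarrow> bool" where
  "quasi_measurable RA RB f \<longleftrightarrow> (\<forall>\<alpha>\<in>RA. f \<circ> \<alpha> \<in> RB)"

definition const_DP :: "('f::order \<times> 'r::order) \<Rightarrow> ('f \<times> 'r) set" where
  "const_DP x = {(yF, yR). yF \<le> fst x \<and> snd x \<le> yR}"

end

theory Submission
  imports Defs
begin


lemma metrizable_separable_imp_second_countable:
  assumes "metrizable_space X" "separable_space X" shows "second_countable X"
proof -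
  obtain M d where md: "Metric_space M d" and X: "X = Metric_space.mtopology M d"
    using assms(1) metrizable_space_def by blast
  interpret Metric_space M d by (rule md)
  obtain C where C: "countable C" "C \<subseteq> M" "mtopology closure_of C = M"
    using assms(2) unfolding X by (metis separable_space_def topspace_mtopology)
  define B where "B = (\<lambda>(c,n). mball c (inverse (Suc n))) ` (C \<times> (UNIV::nat set))"
  show ?thesis unfolding second_countable_def X
  proof (intro exI[of _ B] conjI ballI allI impI)
    show "countable B" using C by (simp add: B_def)
    fix V assume "V \<in> B" then show "openin mtopology V" by (auto simp: B_def)
  next
    fix U x assume "openin mtopology U \<and> x \<in> U"
    then obtain r where r: "r>0" "mball x r \<subseteq> U" and xM: "x \<in> M" 
      using openin_mtopology by (meson openin_subset subsetD)
    obtain n where n: "inverse (real (Suc n)) < r/2"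
      using r by (metis half_gt_zero_iff reals_Archimedean)
    have "x \<in> mtopology closure_of C" using C xM by simp
    then obtain c where c: "c \<in> C" "c \<in> mball x (inverse (Suc n))"
      unfolding in_closure_of using xM by (meson centre_in_mball_iff inverse_positive_iff_positive of_nat_0_less_iff openin_mball zero_less_Suc)
    show "\<exists>V\<in>B. x \<in> V \<and> V \<subseteq> U"
    proof (intro bexI conjI)
      show "x \<in> mball c (inverse (Suc n))" using c by (auto simp: commute)
      show "mball c (inverse (Suc n)) \<subseteq> U"
      proof
        fix y assume y: "y \<in> mball c (inverse (Suc n))"
        have "d x y \<le> d x c + d c y" using c y by (intro triangle) auto
        also have "\<dots> < r" using c y n by auto
        finally show "y \<in> U" using r y xM by auto
      qed
      show "mball c (inverse (Suc n)) \<in> B" using c by (auto simp: B_def)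
    qed
  qed
qed



lemma sc_product_nat:
  assumes "\<And>n. second_countable (X n)"
  shows "second_countable (product_topology X (UNIV::nat set))"
proof -
  obtain B where B: "\<And>n. countable (B n)" "\<And>n V. V \<in> B n \<Longrightarrow> openin (X n) V"
    "\<And>n U x. openin (X n) U \<Longrightarrow> x \<in> U \<Longrightarrow> (\<exists>V \<in> B n. x \<in> V \<and> V \<subseteq> U)"
    using assms unfolding second_countable_def by metis
  define BB where "BB = (\<Union>N. (\<lambda>V. PiE UNIV (\<lambda>i. if i<N then V i else topspace (X i))) ` (PiE {..<N} B))"
  show ?thesis unfolding second_countable_def
  proof (intro exI[of _ BB] conjI ballI allI impI)
    show "countable BB" unfolding BB_def
      by (intro countable_UN countable_image countable_PiE) (auto simp: B)
  next
    fix W assume "W \<in> BB"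
    then obtain N V where V: "V \<in> PiE {..<N} B" and W: "W = PiE UNIV (\<lambda>i. if i<N then V i else topspace (X i))"
      by (auto simp: BB_def)
    show "openin (product_topology X UNIV) W" unfolding W
    proof (rule product_topology_basis)
      show "openin (X i) (if i < N then V i else topspace (X i))" for i
        using V B(2) by auto
      show "finite {i. (if i < N then V i else topspace (X i)) \<noteq> topspace (X i)}"
        by (rule finite_subset[of _ "{..<N}"]) auto
    qed
  next
    fix S x assume Sx: "openin (product_topology X UNIV) S \<and> x \<in> S"
    then obtain U where U: "x \<in> PiE UNIV U" "\<And>i. openin (X i) (U i)" "finite {i. U i \<noteq> topspace (X i)}"
       "PiE UNIV U \<subseteq> S"
      using product_topology_open_contains_basis[of X UNIV S x] Sx by blast
    obtain N where N: "\<And>i. U i \<noteq> topspace (X i) \<Longrightarrow> i < N"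
      using finite_nat_bounded[OF U(3)] by auto
    have "\<forall>i. \<exists>V. V \<in> B i \<and> x i \<in> V \<and> V \<subseteq> U i"
      using B(3) U(1,2) by (metis PiE_iff UNIV_I)
    then obtain V where V: "\<And>i. V i \<in> B i \<and> x i \<in> V i \<and> V i \<subseteq> U i"
      using choice[of "\<lambda>i V. V \<in> B i \<and> x i \<in> V \<and> V \<subseteq> U i"] by blast
    let ?W = "PiE UNIV (\<lambda>i. if i<N then restrict V {..<N} i else topspace (X i))"
    show "\<exists>W\<in>BB. x \<in> W \<and> W \<subseteq> S"
    proof (intro bexI conjI)
      show "?W \<in> BB" unfolding BB_def using V by (auto intro!: exI[of _ N])
      show "x \<in> ?W" using V U(1,2) openin_subset by (fastforce simp: PiE_iff)
      show "?W \<subseteq> S"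
      proof
        fix y assume yW: "y \<in> ?W"
        have "y i \<in> U i" for i
        proof -
          have yi: "y i \<in> (if i < N then restrict V {..<N} i else topspace (X i))"
            using PiE_mem[OF yW] by blast
          show ?thesis
          proof (cases "i<N")
            case True with yi V show ?thesis by auto
          next
            case False then have "U i = topspace (X i)" using N by meson
            with yi False show ?thesis by auto
          qed
        qed
        then have "y \<in> PiE UNIV U" by (simp add: PiE_iff)
        then show "y \<in> S" using U(4) by auto
      qed
    qed
  qed
qed



lemma Polish_sc: "Polish_top P \<Longrightarrow> second_countable P"
  unfolding Polish_top_def
  by (simp add: completely_metrizable_imp_metrizable_space metrizable_separable_imp_second_countable)

lemma Polish_Hausdorff: "Polish_top P \<Longrightarrow> Hausdorff_space P"
  unfolding Polish_top_def
  by (simp add: completely_metrizable_imp_metrizable_space metrizable_imp_Hausdorff_space)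

lemma Polish_closedin: "Polish_top P \<Longrightarrow> closedin P S \<Longrightarrow> Polish_top (subtopology P S)"
  unfolding Polish_top_def
  by (meson Polish_sc Polish_top_def completely_metrizable_space_closedin second_countable_imp_separable_space second_countable_subtopology)

lemma Polish_openin: "Polish_top P \<Longrightarrow> openin P S \<Longrightarrow> Polish_top (subtopology P S)"
  unfolding Polish_top_def
  by (meson Polish_sc Polish_top_def completely_metrizable_space_openin second_countable_imp_separable_space second_countable_subtopology)

lemma Polish_homeomorphic: "Polish_top P \<Longrightarrow> P homeomorphic_space Q \<Longrightarrow> Polish_top Q"
  unfolding Polish_top_def
  using homeomorphic_completely_metrizable_space homeomorphic_separable_space by blast

lemma Polish_prod: "Polish_top P \<Longrightarrow> Polish_top Q \<Longrightarrow> Polish_top (prod_topology P Q)"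
  unfolding Polish_top_def
proof (intro conjI)
  assume a: "completely_metrizable_space P \<and> separable_space P" "completely_metrizable_space Q \<and> separable_space Q"
  then show "completely_metrizable_space (prod_topology P Q)"
    by (simp add: completely_metrizable_space_prod_topology)
  obtain C D where "countable C" "C \<subseteq> topspace P" "P closure_of C = topspace P"
     "countable D" "D \<subseteq> topspace Q" "Q closure_of D = topspace Q"
    using a unfolding separable_space_def by metis
  then show "separable_space (prod_topology P Q)"
    unfolding separable_space_def
    by (intro exI[of _ "C \<times> D"]) (auto simp: closure_of_Times)
qed

lemma Polish_product: "(\<And>n. Polish_top (P n)) \<Longrightarrow> Polish_top (product_topology P (UNIV::nat set))"
  unfolding Polish_top_def
proof (intro conjI)
  assume a: "\<And>n. completely_metrizable_space (P n) \<and> separable_space (P n)"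
  then show "completely_metrizable_space (product_topology P UNIV)"
    by (simp add: completely_metrizable_space_product_topology)
  have "second_countable (product_topology P UNIV)"
    by (rule sc_product_nat) (use a Polish_sc Polish_top_def in blast)
  then show "separable_space (product_topology P UNIV)"
    by (rule second_countable_imp_separable_space)
qed

lemma Polish_discrete_nat: "Polish_top (discrete_topology (UNIV::nat set))"
  unfolding Polish_top_def
  by (simp add: completely_metrizable_space_discrete_topology separable_space_discrete_topology)

lemma Polish_euclidean: "Polish_top (euclidean :: ('a::polish_space) topology)"
  unfolding Polish_top_def
proof (intro conjI)
  show "completely_metrizable_space (euclidean :: 'a topology)"
    by (rule completely_metrizable_space_euclidean)
  obtain B :: "'a set set" where B: "countable B" "topological_basis B"
    using ex_countable_basis by blast
  have "second_countable (euclidean :: 'a topology)"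
    unfolding second_countable_def
  proof (intro exI[of _ B] conjI ballI allI impI)
    show "countable B" by (rule B(1))
    fix V assume "V \<in> B" then show "openin euclidean V"
      using B(2) topological_basis_open by auto
  next
    fix U :: "'a set" and x :: 'a assume "openin euclidean U \<and> x \<in> U"
    then show "\<exists>V\<in>B. x \<in> V \<and> V \<subseteq> U"
      using topological_basisE[OF B(2), of U x] by auto
  qed
  then show "separable_space (euclidean :: 'a topology)"
    by (rule second_countable_imp_separable_space)
qed

lemma Polish_trivial: "Polish_top trivial_topology"
  by (simp add: Polish_top_def empty_completely_metrizable_space separable_space_def)



lemma transport_topology:
  fixes P :: "'a topology" and e :: "'a \<Rightarrow> 'b"
  assumes inj: "inj_on e (topspace P)"
  shows "homeomorphic_map P (topology (\<lambda>U. \<exists>V. openin P V \<and> U = e ` V)) e"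
proof -
  let ?L = "\<lambda>U. \<exists>V. openin P V \<and> U = e ` V"
  have ist: "istopology ?L"
    unfolding istopology_def
  proof (intro conjI allI impI ballI)
    fix S T assume "?L S" "?L T"
    then obtain V W where V: "openin P V" "S = e ` V" and W: "openin P W" "T = e ` W" by blast
    then have "S \<inter> T = e ` (V \<inter> W)"
      using inj_on_image_Int[OF inj] openin_subset by metis
    then show "?L (S \<inter> T)" using V W by blast
  next
    fix K assume K: "\<forall>S\<in>K. ?L S"
    define W where "W = \<Union>{V. openin P V \<and> e ` V \<in> K}"
    have "\<Union>K = e ` W"
    proof
      show "\<Union>K \<subseteq> e ` W"
      proof
        fix y assume "y \<in> \<Union>K"
        then obtain S where "S \<in> K" "y \<in> S" by blast
        then obtain V where "openin P V" "S = e ` V" using K by blast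
        then show "y \<in> e ` W" using \<open>S \<in> K\<close> \<open>y \<in> S\<close> unfolding W_def by blast
      qed
      show "e ` W \<subseteq> \<Union>K" unfolding W_def by blast
    qed
    moreover have "openin P W" unfolding W_def by auto
    ultimately show "?L (\<Union>K)" by blast
  qed
  let ?Q = "topology ?L"
  have oQ: "openin ?Q = ?L" using ist by simp
  have tQ: "topspace ?Q = e ` topspace P"
  proof
    show "topspace ?Q \<subseteq> e ` topspace P"
    proof
      fix y assume "y \<in> topspace ?Q"
      then obtain S where "openin ?Q S" "y \<in> S" unfolding topspace_def by blast
      then obtain V where "openin P V" "S = e ` V" using oQ by auto
      then show "y \<in> e ` topspace P" using \<open>y \<in> S\<close> openin_subset by blast
    qed
    have "openin ?Q (e ` topspace P)" using oQ by auto
    then show "e ` topspace P \<subseteq> topspace ?Q" by (rule openin_subset)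
  qed
  show ?thesis
  proof (rule bijective_open_imp_homeomorphic_map)
    show "continuous_map P ?Q e"
      unfolding continuous_map_def
    proof (intro conjI allI impI)
      show "e \<in> topspace P \<rightarrow> topspace ?Q" using tQ by auto
      fix U assume "openin ?Q U"
      then obtain V where V: "openin P V" "U = e ` V" using oQ by auto
      have "{x \<in> topspace P. e x \<in> U} = V"
        using V inj openin_subset unfolding inj_on_def by blast
      then show "openin P {x \<in> topspace P. e x \<in> U}" using V by simp
    qed
    show "open_map P ?Q e" unfolding open_map_def using oQ by auto
  qed (use tQ inj in auto)
qed

lemma Polish_inj_real:
  assumes "Polish_top (P::'a topology)"
  obtains e :: "'a \<Rightarrow> real" where "inj_on e (topspace P)"
proof -
  obtain B where B: "countable B" "\<And>V. V \<in> B \<Longrightarrow> openin P V"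
    "\<And>U x. openin P U \<Longrightarrow> x \<in> U \<Longrightarrow> (\<exists>V \<in> B. x \<in> V \<and> V \<subseteq> U)"
    using Polish_sc[OF assms] unfolding second_countable_def by metis
  have H: "Hausdorff_space P" using Polish_Hausdorff[OF assms] .
  define f where "f x = to_nat_on B ` {V \<in> B. x \<in> V}" for x
  have injf: "inj_on f (topspace P)"
  proof (rule inj_onI, rule ccontr)
    fix x y assume x: "x \<in> topspace P" and y: "y \<in> topspace P" and fxy: "f x = f y" and ne: "x \<noteq> y"
    then obtain U W where UW: "openin P U" "openin P W" "x \<in> U" "y \<in> W" "disjnt U W"
      using H unfolding Hausdorff_space_def by metis
    obtain V where V: "V \<in> B" "x \<in> V" "V \<subseteq> U" using B(3) UW by metis
    have "to_nat_on B V \<in> f y" using fxy V unfolding f_def by auto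
    then obtain V' where "V' \<in> B" "y \<in> V'" "to_nat_on B V = to_nat_on B V'" unfolding f_def by auto
    then have "V = V'" using V B(1) by simp
    then show False using UW V \<open>y \<in> V'\<close> by (auto simp: disjnt_def)
  qed
  obtain g :: "nat set \<Rightarrow> real" where "bij_betw g UNIV UNIV"
    using nat_sets_eqpoll_reals unfolding eqpoll_def by blast
  then have "inj g" by (simp add: bij_betw_def)
  then have "inj_on (g \<circ> f) (topspace P)"
    using injf by (simp add: comp_inj_on inj_on_subset)
  then show ?thesis using that by blast
qed

lemma Polish_real_copy:
  assumes "Polish_top (P::'a topology)"
  obtains Q :: "real topology" and h where "Polish_top Q" "homeomorphic_map P Q h"
proof -
  obtain e :: "'a \<Rightarrow> real" where "inj_on e (topspace P)" using Polish_inj_real[OF assms] by blast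
  then have "homeomorphic_map P (topology (\<lambda>U. \<exists>V. openin P V \<and> U = e ` V)) e"
    by (rule transport_topology)
  then show ?thesis
    using that assms Polish_homeomorphic homeomorphic_map_imp_homeomorphic_space by blast
qed

lemma analytic_inI:
  assumes "Polish_top (P::'a topology)" "continuous_map P X g" "g ` topspace P = A"
  shows "analytic_in X A"
proof -
  obtain Q :: "real topology" and h where Q: "Polish_top Q" "homeomorphic_map P Q h"
    using Polish_real_copy[OF assms(1)] by blast
  then obtain k where k: "homeomorphic_maps P Q h k" using homeomorphic_map_maps by blast
  have "continuous_map Q X (g \<circ> k)"
    using k assms(2) continuous_map_compose homeomorphic_maps_def by blast
  moreover have "(g \<circ> k) ` topspace Q = A"
  proof -
    have "k ` topspace Q = topspace P"
      using k by (metis homeomorphic_imp_surjective_map homeomorphic_maps_map)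
    then show ?thesis using assms(3) by (metis image_comp)
  qed
  ultimately show ?thesis unfolding analytic_in_def using Q(1) by blast
qed

lemma analytic_inE:
  assumes "analytic_in X A"
  obtains P :: "real topology" and g where "Polish_top P" "continuous_map P X g" "g ` topspace P = A"
  using assms unfolding analytic_in_def by blast



lemma analytic_subset: "analytic_in X A \<Longrightarrow> A \<subseteq> topspace X"
  unfolding analytic_in_def using continuous_map_image_subset_topspace by blast

lemma analytic_empty: "analytic_in X {}"
  by (rule analytic_inI[OF Polish_trivial, of X "\<lambda>x::real. undefined"]) auto

lemma analytic_image:
  assumes "analytic_in X A" "continuous_map X Y f"
  shows "analytic_in Y (f ` A)"
proof -
  obtain P :: "real topology" and g where P: "Polish_top P" "continuous_map P X g" "g ` topspace P = A"
    using assms(1) by (rule analytic_inE)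
  show ?thesis
    by (rule analytic_inI[OF P(1), of Y "f \<circ> g"])
       (use P assms(2) continuous_map_compose in \<open>auto simp: image_comp\<close>)
qed

lemma analytic_closedin:
  assumes "analytic_in X (topspace X)" "closedin X C"
  shows "analytic_in X C"
proof -
  obtain P :: "real topology" and g where P: "Polish_top P" "continuous_map P X g" "g ` topspace P = topspace X"
    using assms(1) by (rule analytic_inE)
  let ?S = "{x \<in> topspace P. g x \<in> C}"
  have "closedin P ?S" using closedin_continuous_map_preimage[OF P(2) assms(2)] .
  then have "Polish_top (subtopology P ?S)" using P(1) Polish_closedin by blast
  moreover have "continuous_map (subtopology P ?S) X g" using P(2) continuous_map_from_subtopology by blast
  moreover have "g ` topspace (subtopology P ?S) = C"
    using P(3) closedin_subset[OF assms(2)] by auto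
  ultimately show ?thesis by (rule analytic_inI)
qed

lemma analytic_openin:
  assumes "analytic_in X (topspace X)" "openin X C"
  shows "analytic_in X C"
proof -
  obtain P :: "real topology" and g where P: "Polish_top P" "continuous_map P X g" "g ` topspace P = topspace X"
    using assms(1) by (rule analytic_inE)
  let ?S = "{x \<in> topspace P. g x \<in> C}"
  have "openin P ?S" using openin_continuous_map_preimage[OF P(2) assms(2)] .
  then have "Polish_top (subtopology P ?S)" using P(1) Polish_openin by blast
  moreover have "continuous_map (subtopology P ?S) X g" using P(2) continuous_map_from_subtopology by blast
  moreover have "g ` topspace (subtopology P ?S) = C"
    using P(3) openin_subset[OF assms(2)] by auto
  ultimately show ?thesis by (rule analytic_inI)
qed

lemma analytic_Inter:
  assumes H: "Hausdorff_space X" and A: "\<And>n::nat. analytic_in X (A n)"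
  shows "analytic_in X (\<Inter>n. A n)"
proof -
  have "\<forall>n. \<exists>P g. Polish_top (P :: real topology) \<and> continuous_map P X g \<and> g ` topspace P = A n"
    using A unfolding analytic_in_def by blast
  then obtain P :: "nat \<Rightarrow> real topology" and g where
    P: "\<And>n. Polish_top (P n)" "\<And>n. continuous_map (P n) X (g n)" "\<And>n. g n ` topspace (P n) = A n"
    by metis
  let ?T = "product_topology P UNIV"
  let ?Z = "\<Inter>n. {p \<in> topspace ?T. g n (p n) = g 0 (p 0)}"
  have cg: "continuous_map ?T X (\<lambda>p. g n (p n))" for n
    using continuous_map_compose[OF continuous_map_product_projection[of n UNIV P] P(2)[of n]]
    by (simp add: o_def)
  have cl: "closedin ?T {p \<in> topspace ?T. g n (p n) = g 0 (p 0)}" for n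
    by (rule closedin_continuous_maps_eq[OF H cg cg])
  have "closedin ?T ?Z"
    using cl by (intro closedin_Inter) blast+
  then have "Polish_top (subtopology ?T ?Z)"
    using Polish_closedin Polish_product P(1) by blast
  moreover have "continuous_map (subtopology ?T ?Z) X (\<lambda>p. g 0 (p 0))"
    using cg continuous_map_from_subtopology by blast
  moreover have "(\<lambda>p. g 0 (p 0)) ` topspace (subtopology ?T ?Z) = (\<Inter>n. A n)"
  proof
    have "?Z \<subseteq> topspace ?T" by auto
    then show "(\<lambda>p. g 0 (p 0)) ` topspace (subtopology ?T ?Z) \<subseteq> (\<Inter>n. A n)"
      using P(3) by (auto simp: PiE_iff) (metis image_eqI)
    show "(\<Inter>n. A n) \<subseteq> (\<lambda>p. g 0 (p 0)) ` topspace (subtopology ?T ?Z)"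
    proof
      fix x assume x: "x \<in> (\<Inter>n. A n)"
      have "\<forall>n. \<exists>q. q \<in> topspace (P n) \<and> g n q = x"
        using x P(3) by (metis INT_iff UNIV_I imageE)
      then obtain p where p: "\<And>n. p n \<in> topspace (P n) \<and> g n (p n) = x" by metis
      then have pin: "p \<in> topspace (subtopology ?T ?Z)" by (auto simp: PiE_iff)
      have xe: "x = g 0 (p 0)" using p by simp
      show "x \<in> (\<lambda>p. g 0 (p 0)) ` topspace (subtopology ?T ?Z)"
        using image_eqI[of x "\<lambda>p. g 0 (p 0)" p, OF xe pin] .
    qed
  qed
  ultimately show ?thesis by (rule analytic_inI)
qed

lemma analytic_Union_nonempty:
  assumes A: "\<And>n::nat. analytic_in X (A n)" and ne: "\<And>n. A n \<noteq> {}"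
  shows "analytic_in X (\<Union>n. A n)"
proof -
  have "\<forall>n. \<exists>P g. Polish_top (P :: real topology) \<and> continuous_map P X g \<and> g ` topspace P = A n"
    using A unfolding analytic_in_def by blast
  then obtain P :: "nat \<Rightarrow> real topology" and g where
    P: "\<And>n. Polish_top (P n)" "\<And>n. continuous_map (P n) X (g n)" "\<And>n. g n ` topspace (P n) = A n"
    by metis
  let ?T = "product_topology P UNIV"
  let ?D = "prod_topology (discrete_topology (UNIV::nat set)) ?T"
  have "\<forall>n. \<exists>q. q \<in> topspace (P n)" using ne P(3) by blast
  then obtain p0 where p0: "\<And>n. p0 n \<in> topspace (P n)" by metis
  then have p0T: "p0 \<in> topspace ?T" by (auto simp: PiE_iff)
  have cg: "continuous_map ?T X (\<lambda>p. g n (p n))" for n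
    using continuous_map_compose[OF continuous_map_product_projection[of n UNIV P] P(2)[of n]]
    by (simp add: o_def)
  have "Polish_top ?D" using Polish_prod Polish_discrete_nat Polish_product P(1) by blast
  moreover have "continuous_map ?D X (\<lambda>(k,p). g k (p k))"
    unfolding continuous_map_def
  proof (intro conjI allI impI)
    show "(\<lambda>(k,p). g k (p k)) \<in> topspace ?D \<rightarrow> topspace X"
    proof
      fix z assume "z \<in> topspace ?D"
      then obtain k p where z: "z = (k,p)" "p \<in> topspace ?T" by auto
      then have "g k (p k) \<in> topspace X" using cg[of k] unfolding continuous_map_def by blast
      then show "(\<lambda>(k,p). g k (p k)) z \<in> topspace X" using z by simp
    qed
    fix U assume U: "openin X U"
    show "openin ?D {x \<in> topspace ?D. (\<lambda>(k,p). g k (p k)) x \<in> U}"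
      unfolding openin_prod_topology_alt
    proof (intro allI impI)
      fix k p assume kp: "(k, p) \<in> {x \<in> topspace ?D. (\<lambda>(k,p). g k (p k)) x \<in> U}"
      let ?V = "{q \<in> topspace ?T. g k (q k) \<in> U}"
      have "openin ?T ?V" using openin_continuous_map_preimage[OF cg U] .
      moreover have "{k} \<times> ?V \<subseteq> {x \<in> topspace ?D. (\<lambda>(k,p). g k (p k)) x \<in> U}" by auto
      moreover have "p \<in> ?V" using kp by auto
      ultimately show "\<exists>U' V. openin (discrete_topology UNIV) U' \<and> openin ?T V \<and> k \<in> U' \<and> p \<in> V \<and>
               U' \<times> V \<subseteq> {x \<in> topspace ?D. (\<lambda>(k,p). g k (p k)) x \<in> U}"
        by (intro exI[of _ "{k}"] exI[of _ ?V]) auto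
    qed
  qed
  moreover have "(\<lambda>(k,p). g k (p k)) ` topspace ?D = (\<Union>n. A n)"
  proof
    show "(\<lambda>(k,p). g k (p k)) ` topspace ?D \<subseteq> (\<Union>n. A n)"
      using P(3) by (auto simp: PiE_iff) (metis P(3) image_eqI)
    show "(\<Union>n. A n) \<subseteq> (\<lambda>(k,p). g k (p k)) ` topspace ?D"
    proof
      fix x assume "x \<in> (\<Union>n. A n)"
      then obtain k where "x \<in> A k" by blast
      then obtain q where kq: "q \<in> topspace (P k)" "g k q = x" using P(3)[of k] by (metis imageE)
      let ?p = "p0(k := q)"
      have "?p \<in> topspace ?T" using p0 kq by (auto simp: PiE_iff)
      then have pin: "(k, ?p) \<in> topspace ?D" by simp
      have xe: "x = (\<lambda>(k,p). g k (p k)) (k, ?p)" using kq by simp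
      show "x \<in> (\<lambda>(k,p). g k (p k)) ` topspace ?D"
        using image_eqI[of x "\<lambda>(k,p). g k (p k)" "(k, ?p)", OF xe pin] .
    qed
  qed
  ultimately show ?thesis by (rule analytic_inI)
qed

lemma analytic_Union:
  assumes A: "\<And>n::nat. analytic_in X (A n)"
  shows "analytic_in X (\<Union>n. A n)"
proof (cases "\<forall>n. A n = {}")
  case True then show ?thesis by (simp add: analytic_empty)
next
  case False
  then obtain n0 where n0: "A n0 \<noteq> {}" by blast
  define B where "B n = (if A n = {} then A n0 else A n)" for n
  have "(\<Union>n. B n) = (\<Union>n. A n)" unfolding B_def by (auto split: if_splits)
  moreover have "analytic_in X (\<Union>n. B n)"
    by (rule analytic_Union_nonempty) (auto simp: B_def A n0)
  ultimately show ?thesis by simp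
qed

lemma sigma_sets_analytic:
  assumes H: "Hausdorff_space X" and S: "analytic_in X (topspace X)"
    and B: "B \<in> sigma_sets (topspace X) {U. openin X U}"
  shows "analytic_in X B \<and> analytic_in X (topspace X - B)"
  using B
proof induction
  case (Basic a)
  then show ?case using analytic_openin[OF S] analytic_closedin[OF S] closedin_diff[OF closedin_topspace] by auto
next
  case Empty
  then show ?case using S analytic_empty by simp
next
  case (Compl a)
  moreover have "topspace X - (topspace X - a) = a" using Compl analytic_subset by blast
  ultimately show ?case by simp
next
  case (Union a)
  have a1: "\<And>i. analytic_in X (a i)" and a2: "\<And>i. analytic_in X (topspace X - a i)"
    using Union.IH by blast+
  have "analytic_in X (\<Union>i. a i)" using analytic_Union[OF a1] .
  moreover have "topspace X - (\<Union>i. a i) = (\<Inter>i. topspace X - a i)" by blast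
  moreover have "analytic_in X (\<Inter>i. topspace X - a i)" using analytic_Inter[OF H a2] .
  ultimately show ?case by simp
qed

lemma borel_analytic:
  assumes H: "Hausdorff_space (euclidean :: 'a::topological_space topology)"
    and S: "analytic_in (euclidean :: 'a topology) UNIV"
    and B: "B \<in> sets (borel :: 'a measure)"
  shows "analytic_in euclidean B"
  using sigma_sets_analytic[OF H] S B by (simp add: sets_borel)



lemma analytic_prod_space:
  assumes "analytic_in X (topspace X)" "analytic_in Y (topspace Y)"
  shows "analytic_in (prod_topology X Y) (topspace (prod_topology X Y))"
proof -
  obtain P :: "real topology" and g where P: "Polish_top P" "continuous_map P X g" "g ` topspace P = topspace X"
    using assms(1) by (rule analytic_inE)
  obtain Q :: "real topology" and h where Q: "Polish_top Q" "continuous_map Q Y h" "h ` topspace Q = topspace Y"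
    using assms(2) by (rule analytic_inE)
  have "continuous_map (prod_topology P Q) (prod_topology X Y) (\<lambda>(x,y). (g x, h y))"
    using P(2) Q(2) continuous_map_prod_top by blast
  moreover have "(\<lambda>(x,y). (g x, h y)) ` topspace (prod_topology P Q) = topspace (prod_topology X Y)"
    using P(3) Q(3) by (simp add: image_paired_Times)
  ultimately show ?thesis using Polish_prod[OF P(1) Q(1)] analytic_inI by blast
qed

lemma analytic_polish_type: "analytic_in (euclidean :: 'a::polish_space topology) UNIV"
  using analytic_inI[OF Polish_euclidean, of euclidean "id :: 'a \<Rightarrow> 'a"] by simp

lemma open_countable_rectangles:
  assumes A: "analytic_in (euclidean :: 'a::topological_space topology) UNIV"
    and B: "analytic_in (euclidean :: 'b::topological_space topology) UNIV"
    and W: "open (W :: ('a \<times> 'b) set)"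
  shows "\<exists>R. countable R \<and> (\<forall>UV\<in>R. open (fst UV) \<and> open (snd UV)) \<and> W = (\<Union>UV\<in>R. fst UV \<times> snd UV)"
proof -
  obtain P :: "real topology" and g where P: "Polish_top P" "continuous_map P euclidean g" "g ` topspace P = (UNIV::'a set)"
    using A by (rule analytic_inE)
  obtain Q :: "real topology" and h where Q: "Polish_top Q" "continuous_map Q euclidean h" "h ` topspace Q = (UNIV::'b set)"
    using B by (rule analytic_inE)
  let ?PQ = "prod_topology P Q"
  let ?G = "\<lambda>(x,y). (g x, h y)"
  have cG: "continuous_map ?PQ euclidean ?G"
    using continuous_map_prod_top[of P Q euclidean euclidean g h] P(2) Q(2) by simp
  have sG: "?G ` topspace ?PQ = UNIV"
    using P(3) Q(3) by (simp add: image_paired_Times)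
  let ?S = "{z \<in> topspace ?PQ. ?G z \<in> W}"
  have "second_countable (subtopology ?PQ ?S)"
    using Polish_sc[OF Polish_prod[OF P(1) Q(1)]] second_countable_subtopology by blast
  then have L: "Lindelof_space (subtopology ?PQ ?S)" by (rule second_countable_imp_Lindelof_space)
  let ?C = "{UV. open (fst UV) \<and> open (snd UV) \<and> fst UV \<times> snd UV \<subseteq> W}"
  define f where "f UV = {z \<in> ?S. ?G z \<in> fst UV \<times> snd UV}" for UV
  have opf: "openin (subtopology ?PQ ?S) (f UV)" if "UV \<in> ?C" for UV
  proof -
    have "openin (euclidean :: ('a \<times> 'b) topology) (fst UV \<times> snd UV)"
      using that by (auto intro: open_Times)
    then have "openin ?PQ {z \<in> topspace ?PQ. ?G z \<in> fst UV \<times> snd UV}"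
      using openin_continuous_map_preimage[OF cG] by blast
    then show ?thesis unfolding f_def openin_subtopology using that by auto
  qed
  have cov: "\<Union>(f ` ?C) = topspace (subtopology ?PQ ?S)"
  proof
    show "\<Union>(f ` ?C) \<subseteq> topspace (subtopology ?PQ ?S)" unfolding f_def by auto
    show "topspace (subtopology ?PQ ?S) \<subseteq> \<Union>(f ` ?C)"
    proof
      fix z assume z: "z \<in> topspace (subtopology ?PQ ?S)"
      then have zS: "z \<in> ?S" by auto
      then obtain U V where UV: "open U" "open V" "?G z \<in> U \<times> V" "U \<times> V \<subseteq> W"
        using W open_prod_elim by blast
      then have "(U,V) \<in> ?C" by auto
      moreover have "z \<in> f (U,V)" using zS UV unfolding f_def by auto
      ultimately show "z \<in> \<Union>(f ` ?C)" by blast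
    qed
  qed
  obtain \<V> where V: "countable \<V>" "\<V> \<subseteq> f ` ?C" "\<Union>\<V> = topspace (subtopology ?PQ ?S)"
  proof -
    have op2: "\<forall>U\<in>f ` ?C. openin (subtopology ?PQ ?S) U" using opf by blast
    show ?thesis
      using L[unfolded Lindelof_space_def, rule_format, OF conjI[OF op2 cov]] that by blast
  qed
  then obtain R where R: "countable R" "R \<subseteq> ?C" "\<V> = f ` R"
    using countable_subset_image[of \<V> f ?C] by blast
  show ?thesis
  proof (intro exI conjI)
    show "countable R" by (rule R(1))
    show "\<forall>UV\<in>R. open (fst UV) \<and> open (snd UV)" using R(2) by auto
    show "W = (\<Union>UV\<in>R. fst UV \<times> snd UV)"
    proof
      show "(\<Union>UV\<in>R. fst UV \<times> snd UV) \<subseteq> W" using R(2) by auto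
      show "W \<subseteq> (\<Union>UV\<in>R. fst UV \<times> snd UV)"
      proof
        fix w assume w: "w \<in> W"
        have "w \<in> ?G ` topspace ?PQ" using sG by simp
        then obtain z where z0: "w = ?G z" "z \<in> topspace ?PQ" by (rule imageE)
        then have z: "z \<in> topspace ?PQ" "?G z = w" by simp_all
        then have "z \<in> topspace (subtopology ?PQ ?S)" using w by auto
        then have "z \<in> \<Union>(f ` R)" using V(3) R(3) by simp
        then obtain UV where "UV \<in> R" "z \<in> f UV" by blast
        then show "w \<in> (\<Union>UV\<in>R. fst UV \<times> snd UV)" using z unfolding f_def by auto
      qed
    qed
  qed
qed

lemma pair_measurable_analytic:
  assumes A: "analytic_in (euclidean :: 'a::topological_space topology) UNIV"
    and B: "analytic_in (euclidean :: 'b::topological_space topology) UNIV"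
    and f: "(f :: 'm \<Rightarrow> 'a) \<in> borel_measurable M" and g: "(g :: 'm \<Rightarrow> 'b) \<in> borel_measurable M"
  shows "(\<lambda>x. (f x, g x)) \<in> borel_measurable M"
proof (rule borel_measurableI)
  fix W :: "('a \<times> 'b) set" assume "open W"
  then obtain R where R: "countable R" "\<forall>UV\<in>R. open (fst UV) \<and> open (snd UV)"
    "W = (\<Union>UV\<in>R. fst UV \<times> snd UV)"
    using open_countable_rectangles[OF A B \<open>open W\<close>] by blast
  have "(\<lambda>x. (f x, g x)) -` W \<inter> space M = \<Union>((\<lambda>UV. (f -` fst UV \<inter> space M) \<inter> (g -` snd UV \<inter> space M)) ` R)"
    using R(3) by auto
  also have "\<dots> \<in> sets M"
  proof (rule sets.countable_Union)
    show "countable ((\<lambda>UV. (f -` fst UV \<inter> space M) \<inter> (g -` snd UV \<inter> space M)) ` R)"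
      using R(1) by simp
    show "(\<lambda>UV. (f -` fst UV \<inter> space M) \<inter> (g -` snd UV \<inter> space M)) ` R \<subseteq> sets M"
    proof (rule image_subsetI)
      fix UV assume "UV \<in> R"
      then have o: "open (fst UV)" "open (snd UV)" using R(2) by auto
      have "f -` fst UV \<inter> space M \<in> sets M" using measurable_sets[OF f borel_open[OF o(1)]] by simp
      moreover have "g -` snd UV \<inter> space M \<in> sets M" using measurable_sets[OF g borel_open[OF o(2)]] by simp
      ultimately show "(f -` fst UV \<inter> space M) \<inter> (g -` snd UV \<inter> space M) \<in> sets M" by (rule sets.Int)
    qed
  qed
  finally show "(\<lambda>x. (f x, g x)) -` W \<inter> space M \<in> sets M" .
qed



lemma borel_meas_cont: "continuous_on UNIV f \<Longrightarrow> f \<in> borel_measurable borel"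
  by (rule borel_measurable_continuous_onI)

theorem theorem6:
  assumes "Souslin_space (euclidean :: ('f::{topological_space,order}) topology)"
      and "Souslin_space (euclidean :: ('r::{topological_space,order}) topology)"
      and "Borel_order TYPE('f)"
      and "Borel_order TYPE('r)"
  shows "(\<forall>x. const_DP x \<in> (DP_set :: ('f \<times> 'r) set set)) \<and>
         quasi_measurable (pair_rv :: ('o::polish_space \<Rightarrow> 'f \<times> 'r) set) DP_rv const_DP"
proof -
  have HF: "Hausdorff_space (euclidean::'f topology)" and AF: "analytic_in euclidean (UNIV::'f set)"
    using assms(1) unfolding Souslin_space_def by auto
  have HR: "Hausdorff_space (euclidean::'r topology)" and AR: "analytic_in euclidean (UNIV::'r set)"
    using assms(2) unfolding Souslin_space_def by auto
  have LeF: "{p :: 'f \<times> 'f. fst p \<le> snd p} \<in> sets borel"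
    using assms(3) unfolding Borel_order_def .
  have LeR: "{p :: 'r \<times> 'r. fst p \<le> snd p} \<in> sets borel"
    using assms(4) unfolding Borel_order_def .
  have P1: "\<forall>x. const_DP x \<in> (DP_set :: ('f \<times> 'r) set set)"
  proof
    fix x :: "'f \<times> 'r"
    have "analytic_in euclidean {x}"
      using analytic_inI[OF Polish_euclidean[where 'a=real], of euclidean "\<lambda>_. x"] by simp
    moreover have "const_DP x = up_opF {x}" unfolding const_DP_def up_opF_def by auto
    ultimately show "const_DP x \<in> DP_set" unfolding DP_set_def by blast
  qed
  have E: "(euclidean :: ('o \<times> 'f \<times> 'r) topology) = prod_topology euclidean (prod_topology euclidean euclidean)"
    by simp
  have HX: "Hausdorff_space (euclidean :: ('o \<times> 'f \<times> 'r) topology)"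
  proof -
    have h1: "Hausdorff_space (prod_topology (euclidean::'f topology) (euclidean::'r topology))"
      using HF HR Hausdorff_space_prod_topology by blast
    have "Hausdorff_space (prod_topology (euclidean::'o topology) (prod_topology (euclidean::'f topology) (euclidean::'r topology)))"
      using h1 Hausdorff_space_euclidean Hausdorff_space_prod_topology by blast
    then show ?thesis by (simp only: prod_topology_euclidean)
  qed
  have AX: "analytic_in (euclidean :: ('o \<times> 'f \<times> 'r) topology) UNIV"
  proof -
    have "analytic_in (prod_topology euclidean (prod_topology euclidean euclidean))
            (topspace (prod_topology (euclidean :: 'o topology) (prod_topology (euclidean :: 'f topology) (euclidean :: 'r topology))))"
      by (intro analytic_prod_space) (use analytic_polish_type AF AR in simp_all)
    then show ?thesis by simp
  qed
  have fstm: "(fst :: 'o \<times> 'f \<times> 'r \<Rightarrow> 'o) \<in> borel_measurable borel"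
    by (rule borel_meas_cont) (intro continuous_intros)
  have fsm: "(\<lambda>z::'o \<times> 'f \<times> 'r. fst (snd z)) \<in> borel_measurable borel"
    by (rule borel_meas_cont) (intro continuous_intros)
  have ssm: "(\<lambda>z::'o \<times> 'f \<times> 'r. snd (snd z)) \<in> borel_measurable borel"
    by (rule borel_meas_cont) (intro continuous_intros)
  have "quasi_measurable (pair_rv :: ('o \<Rightarrow> 'f \<times> 'r) set) DP_rv const_DP"
    unfolding quasi_measurable_def
  proof
    fix \<alpha> :: "'o \<Rightarrow> 'f \<times> 'r" assume "\<alpha> \<in> pair_rv"
    then obtain bF bR where \<alpha>: "\<alpha> = (\<lambda>\<omega>. (bF \<omega>, bR \<omega>))" and bF: "bF \<in> borel_measurable borel"
        and bR: "bR \<in> borel_measurable borel"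
      unfolding pair_rv_def by blast
    let ?S = "{(\<omega>, xF, xR). (xF, xR) \<in> (const_DP \<circ> \<alpha>) \<omega>}"
    let ?f1 = "\<lambda>z::'o \<times> 'f \<times> 'r. (fst (snd z), bF (fst z))"
    let ?f2 = "\<lambda>z::'o \<times> 'f \<times> 'r. (bR (fst z), snd (snd z))"
    have Seq: "?S = ?f1 -` {p. fst p \<le> snd p} \<inter> ?f2 -` {p. fst p \<le> snd p}"
      unfolding \<alpha> const_DP_def by auto
    have m1: "?f1 \<in> borel_measurable borel"
      by (rule pair_measurable_analytic[OF AF AF fsm measurable_compose[OF fstm bF]])
    have m2: "?f2 \<in> borel_measurable borel"
      by (rule pair_measurable_analytic[OF AR AR measurable_compose[OF fstm bR] ssm])
    have "?S \<in> sets borel"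
      unfolding Seq using measurable_sets_borel[OF m1 LeF] measurable_sets_borel[OF m2 LeR] by simp
    then have "analytic_in euclidean ?S" by (rule borel_analytic[OF HX AX])
    moreover have "\<forall>\<omega>. (const_DP \<circ> \<alpha>) \<omega> \<in> DP_set" by (simp add: P1[rule_format])
    ultimately show "const_DP \<circ> \<alpha> \<in> DP_rv" unfolding DP_rv_def mem_Collect_eq by blast
  qed
  with P1 show ?thesis by blast
qed

end
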